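(* Let $G$ be an abelian Hausdorff topological group and let $A\subseteq G$. The following conditions are equivalent: (i) $A$ is both topologically independent and absolutely Cauchy summable in $G$; (ii) the Kalton map $K_A:S_A\to G$ is a topologically isomorphic embedding (i.e. a continuous injective homomorphism which is a homeomorphism onto its image $K_A(S_A)=\langle A\rangle$).
   Context: All groups are abelian and all topological groups are Hausdorff. For $a\in G$, $\langle a\rangle$ denotes the cyclic subgroup generated by $a$ with the subspace topology, and $\langle A\rangle$ denotes the subgroup generated by $A$. For $A\subseteq G\setminus\{0\}$, $P_A=\prod_{a\in A}\langle a\rangle$ carries the Tychonoff product topology, and $S_A=\bigoplus_{a\in A}\langle a\rangle$ (elements of $P_A$ with finitely many nonzero coordinates) carries the subspace topology from $P_A$. The Kalton map $K_A:S_A\to G$ is the unique group homomorphism extending each inclusion $\langle a\rangle\to G$, $a\in A$ (so $K_A(\{g_a\})=\sum_a g_a$). A subset $A\subseteq G$ is absolutely Cauchy summable if for every neighbourhood $U$ of $0$ there is a finite $F\subseteq A$ with $\langle A\setminus F\rangle\subseteq U$. A subset $A\subseteq G$ is topologically independent if $0\notin A$ and for every neighbourhood $W$ of $0$ there is a neighbourhood $U$ of $0$ such that for every finite $F\subseteq A$ and all integers $\{z_a:a\in F\}$, $\sum_{a\in F}z_aa\in U$ implies $z_aa\in W$ for all $a\in F$. (Condition (ii) is to be read for $0\notin A$, so that $K_A$ is defined.) *)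

theory Defs
  imports "HOL-Analysis.Analysis"
begin

text \<open>Abelian Hausdorff topological groups are modelled by the type class
  topological_ab_group_add together with t2_space; the group is the whole type.\<close>

definition zmul :: "int \<Rightarrow> 'a::ab_group_add \<Rightarrow> 'a" where
  "zmul n a = (if 0 \<le> n then (\<Sum>i<nat n. a) else - (\<Sum>i<nat (- n). a))"

definition add_subgroup :: "'a::ab_group_add set \<Rightarrow> bool" where
  "add_subgroup H \<longleftrightarrow> 0 \<in> H \<and> (\<forall>x\<in>H. \<forall>y\<in>H. x - y \<in> H)"

definition gen :: "'a::ab_group_add set \<Rightarrow> 'a set" where
  "gen A = \<Inter>{H. add_subgroup H \<and> A \<subseteq> H}"

definition cyc :: "'a::ab_group_add \<Rightarrow> 'a set" where
  "cyc a = gen {a}"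

definition abs_cauchy_summable :: "'a::{topological_ab_group_add,t2_space} set \<Rightarrow> bool" where
  "abs_cauchy_summable A \<longleftrightarrow>
     (\<forall>U. open U \<and> 0 \<in> U \<longrightarrow> (\<exists>F. finite F \<and> F \<subseteq> A \<and> gen (A - F) \<subseteq> U))"

definition top_independent :: "'a::{topological_ab_group_add,t2_space} set \<Rightarrow> bool" where
  "top_independent A \<longleftrightarrow> 0 \<notin> A \<and>
     (\<forall>W. open W \<and> 0 \<in> W \<longrightarrow> (\<exists>U. open U \<and> 0 \<in> U \<and>
        (\<forall>F z. finite F \<and> F \<subseteq> A \<and> (\<Sum>a\<in>F. zmul (z a) a) \<in> U
               \<longrightarrow> (\<forall>a\<in>F. zmul (z a) a \<in> W))))"

text \<open>P_A: the Tychonoff product of the cyclic subgroups (with subspace topology),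
  elements are extensional functions on A.\<close>
definition P_top :: "'a::{topological_ab_group_add,t2_space} set \<Rightarrow> ('a \<Rightarrow> 'a) topology" where
  "P_top A = product_topology (\<lambda>a. subtopology euclidean (cyc a)) A"

definition S_set :: "'a::{topological_ab_group_add,t2_space} set \<Rightarrow> ('a \<Rightarrow> 'a) set" where
  "S_set A = {g \<in> topspace (P_top A). finite {a\<in>A. g a \<noteq> 0}}"

definition S_top :: "'a::{topological_ab_group_add,t2_space} set \<Rightarrow> ('a \<Rightarrow> 'a) topology" where
  "S_top A = subtopology (P_top A) (S_set A)"

definition kalton :: "'a::{topological_ab_group_add,t2_space} set \<Rightarrow> ('a \<Rightarrow> 'a) \<Rightarrow> 'a" where
  "kalton A g = (\<Sum>a\<in>{a\<in>A. g a \<noteq> 0}. g a)"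

text \<open>Topologically isomorphic embedding: homeomorphism onto the image (the map is a
  homomorphism by construction; injectivity and continuity are part of homeomorphic_map).\<close>
definition top_iso_embedding :: "'a::{topological_ab_group_add,t2_space} set \<Rightarrow> bool" where
  "top_iso_embedding A \<longleftrightarrow>
     homeomorphic_map (S_top A) (subtopology euclidean (kalton A ` S_set A)) (kalton A)"

end

theory Submission
  imports Defs
begin


lemma subgroupD:
  assumes "add_subgroup H"
  shows "0 \<in> H" "x \<in> H \<Longrightarrow> y \<in> H \<Longrightarrow> x - y \<in> H"
    "x \<in> H \<Longrightarrow> - x \<in> H" "x \<in> H \<Longrightarrow> y \<in> H \<Longrightarrow> x + y \<in> H"
proof -
  show 0: "0 \<in> H" using assms by (simp add: add_subgroup_def)
  show d: "x \<in> H \<Longrightarrow> y \<in> H \<Longrightarrow> x - y \<in> H" for x y using assms by (simp add: add_subgroup_def)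
  show m: "x \<in> H \<Longrightarrow> - x \<in> H" for x using d[OF 0, of x] by simp
  show "x \<in> H \<Longrightarrow> y \<in> H \<Longrightarrow> x + y \<in> H" using d[of x "- y"] m[of y] by simp
qed

lemma subgroup_sum:
  assumes "add_subgroup H" "\<And>i. i \<in> F \<Longrightarrow> f i \<in> H"
  shows "sum f F \<in> H"
  using assms(2)
proof (induction F rule: infinite_finite_induct)
  case (infinite F) then show ?case using subgroupD(1)[OF assms(1)] by simp
next
  case empty then show ?case using subgroupD(1)[OF assms(1)] by simp
next
  case (insert x F) then show ?case using subgroupD(4)[OF assms(1)] by simp
qed

lemma gen_subgroup: "add_subgroup (gen B)"
  unfolding add_subgroup_def gen_def by auto

lemma gen_sup: "B \<subseteq> gen B"
  unfolding gen_def by auto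

lemma gen_least: "add_subgroup H \<Longrightarrow> B \<subseteq> H \<Longrightarrow> gen B \<subseteq> H"
  unfolding gen_def by auto

lemma gen_mono: "B \<subseteq> C \<Longrightarrow> gen B \<subseteq> gen C"
  by (meson gen_least gen_subgroup gen_sup order_trans)

lemma cyc_sub_gen: "a \<in> B \<Longrightarrow> cyc a \<subseteq> gen B"
  unfolding cyc_def by (simp add: gen_mono)

lemma zero_cyc: "0 \<in> cyc a"
  unfolding cyc_def using subgroupD(1)[OF gen_subgroup] by blast

lemma self_cyc: "a \<in> cyc a"
  unfolding cyc_def using gen_sup by blast

lemma cyc_diff: "x \<in> cyc a \<Longrightarrow> y \<in> cyc a \<Longrightarrow> x - y \<in> cyc a"
  unfolding cyc_def using subgroupD(2)[OF gen_subgroup] by blast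

lemma zmul_nat: "zmul (int n) a = (\<Sum>i<n. a)"
  by (simp add: zmul_def)

lemma zmul_neg: "zmul (- n) a = - zmul n a"
  by (cases "n = 0") (auto simp: zmul_def)

lemma zmul_succ: "zmul (n + 1) a = zmul n a + a"
proof (cases "0 \<le> n")
  case True
  then obtain m where "n = int m" using nonneg_eq_int by blast
  then show ?thesis by (simp add: zmul_def nat_add_distrib)
next
  case False
  define m where "m = nat (- n - 1)"
  have m: "n = - int (Suc m)" using False by (simp add: m_def)
  have "zmul (n + 1) a = - (\<Sum>i<m. a)"
    using m by (simp add: zmul_def)
  moreover have "nat (int m + 1) = Suc m" by simp
  then have "zmul n a = - (\<Sum>i<Suc m. a)" using m by (simp add: zmul_def)
  then have "zmul n a = - (\<Sum>i<m. a) - a" by (simp only: sum.lessThan_Suc minus_add_distrib diff_conv_add_uminus)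
  ultimately show ?thesis by simp
qed

lemma zmul_add: "zmul (m + n) a = zmul m a + zmul n a"
proof (induction n rule: int_induct[where k=0])
  case base then show ?case by (simp add: zmul_def)
next
  case (step1 i)
  then show ?case using zmul_succ[of "m + i" a] zmul_succ[of i a] by (simp add: algebra_simps)
next
  case (step2 i)
  then show ?case using zmul_succ[of "m + (i - 1)" a] zmul_succ[of "i - 1" a] by (simp add: algebra_simps)
qed

lemma zmul_diff: "zmul (m - n) a = zmul m a - zmul n a"
  using zmul_add[of m "- n" a] zmul_neg[of n a] by simp

lemma zmul_in_subgroup:
  assumes "add_subgroup H" "a \<in> H" shows "zmul n a \<in> H"
proof -
  have "zmul (int k) a \<in> H" for k
    unfolding zmul_nat by (rule subgroup_sum[OF assms(1)]) (use assms in auto)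
  then show ?thesis
    by (cases n rule: int_cases2) (auto simp: zmul_neg intro: subgroupD(3)[OF assms(1)])
qed

lemma cyc_eq: "cyc a = range (\<lambda>n. zmul n a)"
proof
  have "add_subgroup (range (\<lambda>n. zmul n a))"
    unfolding add_subgroup_def
  proof (intro conjI ballI)
    show "0 \<in> range (\<lambda>n. zmul n a)" by (rule range_eqI[of _ _ 0]) (simp add: zmul_def)
  next
    fix x y assume "x \<in> range (\<lambda>n. zmul n a)" "y \<in> range (\<lambda>n. zmul n a)"
    then obtain m n where "x = zmul m a" "y = zmul n a" by auto
    then show "x - y \<in> range (\<lambda>n. zmul n a)" by (metis zmul_diff rangeI)
  qed
  moreover have "a \<in> range (\<lambda>n. zmul n a)"
    by (rule range_eqI[of _ _ 1]) (simp add: zmul_def)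
  ultimately show "cyc a \<subseteq> range (\<lambda>n. zmul n a)"
    unfolding cyc_def by (intro gen_least) auto
  show "range (\<lambda>n. zmul n a) \<subseteq> cyc a"
    unfolding cyc_def using zmul_in_subgroup[OF gen_subgroup] gen_sup by blast
qed



lemma topspace_P: "topspace (P_top A) = (\<Pi>\<^sub>E a\<in>A. cyc a)"
  by (simp add: P_top_def)

lemma S_set_iff: "g \<in> S_set A \<longleftrightarrow> g \<in> (\<Pi>\<^sub>E a\<in>A. cyc a) \<and> finite {a\<in>A. g a \<noteq> 0}"
  by (simp add: S_set_def topspace_P)

lemma topspace_S: "topspace (S_top A) = S_set A"
  by (auto simp: S_top_def S_set_def)

lemma kalton_sum:
  assumes "finite T" "T \<subseteq> A" "\<And>a. a \<in> A \<Longrightarrow> a \<notin> T \<Longrightarrow> g a = 0"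
  shows "kalton A g = sum g T"
  unfolding kalton_def
  by (rule sum.mono_neutral_left) (use assms in auto)

definition dff :: "'a set \<Rightarrow> ('a \<Rightarrow> 'b::ab_group_add) \<Rightarrow> ('a \<Rightarrow> 'b) \<Rightarrow> 'a \<Rightarrow> 'b" where
  "dff A h g = restrict (\<lambda>a. h a - g a) A"

lemma dff_S:
  assumes "h \<in> S_set A" "g \<in> S_set A"
  shows "dff A h g \<in> S_set A"
proof -
  have sub: "{a\<in>A. dff A h g a \<noteq> 0} \<subseteq> {a\<in>A. h a \<noteq> 0} \<union> {a\<in>A. g a \<noteq> 0}"
    by (auto simp: dff_def)
  have fin: "finite ({a\<in>A. h a \<noteq> 0} \<union> {a\<in>A. g a \<noteq> 0})"
    using assms by (simp add: S_set_iff)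
  show ?thesis unfolding S_set_iff
  proof
    show "dff A h g \<in> (\<Pi>\<^sub>E a\<in>A. cyc a)"
      using assms by (auto simp: S_set_iff dff_def cyc_diff PiE_iff)
    show "finite {a\<in>A. dff A h g a \<noteq> 0}" by (rule finite_subset[OF sub fin])
  qed
qed

lemma dff_kalton:
  assumes "h \<in> S_set A" "g \<in> S_set A"
  shows "kalton A (dff A h g) = kalton A h - kalton A g"
proof -
  let ?T = "{a\<in>A. h a \<noteq> 0} \<union> {a\<in>A. g a \<noteq> 0}"
  have fin: "finite ?T" using assms by (auto simp: S_set_iff)
  have "kalton A (dff A h g) = sum (dff A h g) ?T"
    by (rule kalton_sum[OF fin]) (auto simp: dff_def)
  also have "\<dots> = sum (\<lambda>a. h a - g a) ?T"
    by (rule sum.cong) (auto simp: dff_def)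
  also have "\<dots> = sum h ?T - sum g ?T"
    by (simp add: sum_subtractf)
  also have "sum h ?T = kalton A h" by (rule kalton_sum[OF fin, symmetric]) auto
  also have "sum g ?T = kalton A g" by (rule kalton_sum[OF fin, symmetric]) auto
  finally show ?thesis .
qed

definition zro :: "'a set \<Rightarrow> 'a \<Rightarrow> 'b::zero" where
  "zro A = restrict (\<lambda>a. 0) A"

lemma zro_S: "zro A \<in> S_set A"
  by (auto simp: S_set_iff zro_def zero_cyc)

lemma zro_kalton: "kalton A (zro A) = 0"
  by (simp add: kalton_def zro_def)

lemma nbhd_add:
  fixes U :: "'a::topological_monoid_add set"
  assumes "open U" "0 \<in> U"
  shows "\<exists>V1 V2. open V1 \<and> open V2 \<and> 0 \<in> V1 \<and> 0 \<in> V2 \<and> (\<forall>x y. x \<in> V1 \<longrightarrow> y \<in> V2 \<longrightarrow> x + y \<in> U)"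
proof -
  have "((\<lambda>p. fst p + snd p) \<longlongrightarrow> (0::'a)) (nhds 0 \<times>\<^sub>F nhds 0)"
    by (intro tendsto_add_zero filterlim_fst filterlim_snd)
  then have "eventually (\<lambda>p. fst p + snd p \<in> U) (nhds 0 \<times>\<^sub>F nhds 0)"
    using assms topological_tendstoD by blast
  then obtain P Q where P: "eventually P (nhds 0)" and Q: "eventually Q (nhds 0)"
    and PQ: "\<forall>x y. P x \<longrightarrow> Q y \<longrightarrow> x + y \<in> U"
    unfolding eventually_prod_filter by auto
  from P obtain V1 where V1: "open V1" "0 \<in> V1" "\<forall>x\<in>V1. P x" by (auto simp: eventually_nhds)
  from Q obtain V2 where V2: "open V2" "0 \<in> V2" "\<forall>x\<in>V2. Q x" by (auto simp: eventually_nhds)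
  have "\<forall>x y. x \<in> V1 \<longrightarrow> y \<in> V2 \<longrightarrow> x + y \<in> U"
  proof (intro allI impI)
    fix x y assume "x \<in> V1" "y \<in> V2"
    then have "P x" "Q y" using V1(3) V2(3) by auto
    then show "x + y \<in> U" using PQ by blast
  qed
  then show ?thesis using V1(1,2) V2(1,2) by (intro exI[of _ V1] exI[of _ V2]) simp
qed

lemma nbhd_sum:
  fixes U :: "'a::topological_comm_monoid_add set"
  assumes "finite F" "open U" "0 \<in> U"
  shows "\<exists>V. open V \<and> 0 \<in> V \<and> (\<forall>x. (\<forall>i\<in>F. x i \<in> V) \<longrightarrow> sum x F \<in> U)"
  using assms
proof (induction F arbitrary: U rule: finite_induct)
  case empty then show ?case by (intro exI[of _ UNIV]) auto
next
  case (insert b F)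
  obtain V1 V2 where V: "open V1" "open V2" "0 \<in> V1" "0 \<in> V2"
    "\<forall>x y. x \<in> V1 \<longrightarrow> y \<in> V2 \<longrightarrow> x + y \<in> U" using nbhd_add[OF insert.prems] by blast
  obtain V' where V': "open V'" "0 \<in> V'" "\<forall>x. (\<forall>i\<in>F. x i \<in> V') \<longrightarrow> sum x F \<in> V2"
    using insert.IH[OF V(2) V(4)] by blast
  have "sum x (insert b F) \<in> U" if "\<forall>i\<in>insert b F. x i \<in> V1 \<inter> V'" for x
  proof -
    have "x b \<in> V1" using that by blast
    moreover have "sum x F \<in> V2" using V'(3) that by blast
    ultimately have "x b + sum x F \<in> U" using V(5) by blast
    then show ?thesis using insert.hyps by simp
  qed
  then show ?case using V V' by (intro exI[of _ "V1 \<inter> V'"]) auto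
qed

lemma open_transl:
  fixes Q :: "'a::topological_monoid_add set"
  assumes "open Q" shows "open {x. x + c \<in> Q}"
proof -
  have "continuous_on UNIV (\<lambda>x. x + c)" by (intro continuous_intros)
  then have "open ((\<lambda>x. x + c) -` Q \<inter> UNIV)"
    using assms continuous_on_open_vimage[OF open_UNIV] by blast
  then show ?thesis by (simp add: vimage_def)
qed

lemma sum_in_gen:
  assumes "\<And>a. a \<in> T \<Longrightarrow> a \<in> B \<and> g a \<in> cyc a"
  shows "sum g T \<in> gen B"
  by (rule subgroup_sum[OF gen_subgroup]) (use assms cyc_sub_gen in blast)



lemma indep_apply:
  fixes A :: "'a::{topological_ab_group_add,t2_space} set"
  assumes ti: "top_independent A" and W: "open W" "0 \<in> W"
  obtains U where "open U" "0 \<in> U"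
    "\<And>d a. d \<in> S_set A \<Longrightarrow> kalton A d \<in> U \<Longrightarrow> a \<in> A \<Longrightarrow> d a \<in> W"
proof -
  obtain U where U: "open U" "0 \<in> U"
    "\<forall>F z. finite F \<and> F \<subseteq> A \<and> (\<Sum>a\<in>F. zmul (z a) a) \<in> U \<longrightarrow> (\<forall>a\<in>F. zmul (z a) a \<in> W)"
    using ti W unfolding top_independent_def by blast
  have "d a \<in> W" if d: "d \<in> S_set A" "kalton A d \<in> U" "a \<in> A" for d a
  proof (cases "d a = 0")
    case True then show ?thesis using W by simp
  next
    case False
    define F where "F = {a\<in>A. d a \<noteq> 0}"
    define z where "z b = (SOME n. d b = zmul n b)" for b
    have dz: "d b = zmul (z b) b" if "b \<in> A" for b
    proof -
      have "d b \<in> cyc b" using d(1) that by (auto simp: S_set_iff PiE_iff)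
      then have "\<exists>n. d b = zmul n b" by (auto simp: cyc_eq)
      then show ?thesis unfolding z_def by (rule someI_ex)
    qed
    have finF: "finite F" "F \<subseteq> A" using d(1) by (auto simp: F_def S_set_iff)
    have "(\<Sum>b\<in>F. zmul (z b) b) = sum d F"
      by (rule sum.cong) (use dz finF in auto)
    also have "sum d F = kalton A d" by (simp add: kalton_def F_def)
    finally have "(\<Sum>b\<in>F. zmul (z b) b) \<in> U" using d(2) by simp
    then have "\<forall>b\<in>F. zmul (z b) b \<in> W" using U(3) finF by blast
    moreover have "a \<in> F" using False d(3) by (simp add: F_def)
    ultimately show ?thesis using dz[OF d(3)] by simp
  qed
  then show ?thesis using that U(1,2) by blast
qed

lemma kalton_inj:
  fixes A :: "'a::{topological_ab_group_add,t2_space} set"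
  assumes ti: "top_independent A"
  shows "inj_on (kalton A) (S_set A)"
proof (rule inj_onI)
  fix h g assume hS: "h \<in> S_set A" and gS: "g \<in> S_set A" and eq: "kalton A h = kalton A g"
  let ?d = "dff A h g"
  have dS: "?d \<in> S_set A" by (rule dff_S[OF hS gS])
  have K0: "kalton A ?d = 0" using dff_kalton[OF hS gS] eq by simp
  have "h b = g b" if b: "b \<in> A" for b
  proof (rule ccontr)
    assume "h b \<noteq> g b"
    then have "?d b \<noteq> 0" using b by (simp add: dff_def)
    then obtain W where W: "open W" "0 \<in> W" "?d b \<notin> W" using t1_space[of 0 "?d b"] by metis
    obtain U where U: "open U" "0 \<in> U"
      "\<And>d a. d \<in> S_set A \<Longrightarrow> kalton A d \<in> U \<Longrightarrow> a \<in> A \<Longrightarrow> d a \<in> W"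
      using indep_apply[OF ti W(1,2)] by metis
    have "?d b \<in> W" using U(3)[OF dS _ b] K0 U(2) by simp
    then show False using W(3) by simp
  qed
  moreover have "h \<in> extensional A" "g \<in> extensional A" using hS gS by (auto simp: S_set_iff PiE_iff)
  ultimately show "h = g" by (intro extensionalityI) auto
qed



lemma kalton_cont:
  fixes A :: "'a::{topological_ab_group_add,t2_space} set"
  assumes ac: "abs_cauchy_summable A"
  shows "continuous_map (S_top A) euclidean (kalton A)"
  unfolding continuous_map_def
proof (intro conjI allI impI)
  show "kalton A \<in> topspace (S_top A) \<rightarrow> topspace euclidean" by simp
  fix Q :: "'a set" assume "openin euclidean Q"
  then have oQ: "open Q" by simp
  show "openin (S_top A) {x \<in> topspace (S_top A). kalton A x \<in> Q}"
  proof (subst openin_subopen, intro ballI)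
    fix g assume g: "g \<in> {x \<in> topspace (S_top A). kalton A x \<in> Q}"
    then have gS: "g \<in> S_set A" and gQ: "kalton A g \<in> Q" by (auto simp: topspace_S)
    let ?Q' = "{x. x + kalton A g \<in> Q}"
    have oQ': "open ?Q'" "0 \<in> ?Q'" using open_transl[OF oQ] gQ by auto
    obtain U1 U2 where U: "open U1" "open U2" "0 \<in> U1" "0 \<in> U2"
      "\<forall>x y. x \<in> U1 \<longrightarrow> y \<in> U2 \<longrightarrow> x + y \<in> ?Q'"
      using nbhd_add[OF oQ'] by blast
    obtain F where F: "finite F" "F \<subseteq> A" "gen (A - F) \<subseteq> U2"
      using ac U(2,4) unfolding abs_cauchy_summable_def by blast
    obtain V where V: "open V" "0 \<in> V" "\<forall>x. (\<forall>i\<in>F. x i \<in> V) \<longrightarrow> sum x F \<in> U1"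
      using nbhd_sum[OF F(1) U(1,3)] by blast
    define Ub where "Ub a = (if a \<in> F then cyc a \<inter> {y. y + - g a \<in> V} else cyc a)" for a
    define T where "T = PiE A Ub \<inter> S_set A"
    have oT: "openin (S_top A) T"
      unfolding T_def S_top_def
    proof (rule openin_subtopology_Int)
      show "openin (P_top A) (PiE A Ub)" unfolding P_top_def
      proof (rule product_topology_basis)
        fix a show "openin (top_of_set (cyc a)) (Ub a)"
        proof (cases "a \<in> F")
          case True
          have "open {y. y + - g a \<in> V}" using open_transl[OF V(1), of "- g a"] by simp
          then show ?thesis using True by (simp add: Ub_def openin_open_Int)
        next
          case False then show ?thesis by (simp add: Ub_def)
        qed
      next
        show "finite {a. Ub a \<noteq> topspace (top_of_set (cyc a))}"
          by (rule finite_subset[OF _ F(1)]) (auto simp: Ub_def)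
      qed
    qed
    have gT: "g \<in> T" using gS V(2) by (auto simp: T_def Ub_def S_set_iff PiE_iff)
    have "T \<subseteq> {x \<in> topspace (S_top A). kalton A x \<in> Q}"
    proof
      fix h assume hT: "h \<in> T"
      then have hS: "h \<in> S_set A" and hU: "h \<in> PiE A Ub" by (auto simp: T_def)
      let ?d = "dff A h g"
      have dS: "?d \<in> S_set A" using dff_S[OF hS gS] .
      define T2 where "T2 = {a\<in>A. ?d a \<noteq> 0} - F"
      have fin2: "finite T2" using dS by (simp add: S_set_iff T2_def)
      have finT: "finite (F \<union> T2)" using F(1) fin2 by simp
      have "kalton A ?d = sum ?d (F \<union> T2)"
        by (rule kalton_sum[OF finT]) (use F(2) in \<open>auto simp: T2_def\<close>)
      also have "\<dots> = sum ?d F + sum ?d T2"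
        by (rule sum.union_disjoint) (use F(1) fin2 in \<open>auto simp: T2_def\<close>)
      finally have Kd: "kalton A ?d = sum ?d F + sum ?d T2" .
      have "\<forall>i\<in>F. ?d i \<in> V"
      proof
        fix i assume i: "i \<in> F"
        then have "i \<in> A" using F(2) by blast
        then have "h i \<in> Ub i" using hU by (auto simp: PiE_iff)
        then show "?d i \<in> V" using i \<open>i \<in> A\<close> by (simp add: Ub_def dff_def)
      qed
      then have s1: "sum ?d F \<in> U1" using V(3) by blast
      have "sum ?d T2 \<in> gen (A - F)"
        by (rule sum_in_gen) (use dS in \<open>auto simp: T2_def S_set_iff PiE_iff\<close>)
      then have s2: "sum ?d T2 \<in> U2" using F(3) by blast
      have "kalton A ?d \<in> ?Q'" using U(5) s1 s2 Kd by simp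
      then have "kalton A h \<in> Q" using dff_kalton[OF hS gS] by simp
      then show "h \<in> {x \<in> topspace (S_top A). kalton A x \<in> Q}" using hS by (simp add: topspace_S)
    qed
    then show "\<exists>T. openin (S_top A) T \<and> g \<in> T \<and> T \<subseteq> {x \<in> topspace (S_top A). kalton A x \<in> Q}"
      using oT gT by blast
  qed
qed

lemma kalton_open:
  fixes A :: "'a::{topological_ab_group_add,t2_space} set"
  assumes ti: "top_independent A"
  shows "open_map (S_top A) (top_of_set (kalton A ` S_set A)) (kalton A)"
  unfolding open_map_def
proof (intro allI impI)
  fix V assume oV: "openin (S_top A) V"
  then obtain T where oT: "openin (P_top A) T" and VT: "V = T \<inter> S_set A"
    unfolding S_top_def openin_subtopology by blast
  show "openin (top_of_set (kalton A ` S_set A)) (kalton A ` V)"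
  proof (subst openin_subopen, intro ballI)
    fix y assume "y \<in> kalton A ` V"
    then obtain g where gV: "g \<in> V" and y: "y = kalton A g" by blast
    have gS: "g \<in> S_set A" and gT: "g \<in> T" using gV VT by auto
    obtain Ub where Ub: "finite {a\<in>A. Ub a \<noteq> topspace (top_of_set (cyc a))}"
      "\<forall>a\<in>A. openin (top_of_set (cyc a)) (Ub a)" "g \<in> PiE A Ub" "PiE A Ub \<subseteq> T"
      using oT gT unfolding P_top_def openin_product_topology_alt by blast
    define F where "F = {a\<in>A. Ub a \<noteq> cyc a}"
    have finF: "finite F" using Ub(1) by (simp add: F_def)
    have "\<forall>a\<in>A. \<exists>Oa. open Oa \<and> Ub a = cyc a \<inter> Oa" using Ub(2) by (simp add: openin_open)
    then obtain Oa where Oa: "\<forall>a\<in>A. open (Oa a) \<and> Ub a = cyc a \<inter> Oa a" by metis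
    define W where "W = (\<Inter>a\<in>F. {x. x + g a \<in> Oa a})"
    have oW: "open W" unfolding W_def
      by (rule open_INT[OF finF]) (use Oa open_transl in \<open>auto simp: F_def\<close>)
    have W0: "0 \<in> W"
    proof -
      have "g a \<in> Oa a" if "a \<in> F" for a
      proof -
        have aA: "a \<in> A" using that by (simp add: F_def)
        then have "g a \<in> Ub a" using Ub(3) by (auto simp: PiE_iff)
        then show ?thesis using Oa aA by blast
      qed
      then show ?thesis by (simp add: W_def)
    qed
    obtain U where U: "open U" "0 \<in> U"
      "\<And>d a. d \<in> S_set A \<Longrightarrow> kalton A d \<in> U \<Longrightarrow> a \<in> A \<Longrightarrow> d a \<in> W"
      using indep_apply[OF ti oW W0] by metis
    define T' where "T' = kalton A ` S_set A \<inter> {x. x + - kalton A g \<in> U}"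
    have oT': "openin (top_of_set (kalton A ` S_set A)) T'"
      unfolding T'_def by (rule openin_open_Int) (rule open_transl[OF U(1)])
    have yT': "y \<in> T'" using y gS U(2) by (simp add: T'_def)
    have "T' \<subseteq> kalton A ` V"
    proof
      fix x assume "x \<in> T'"
      then obtain h where hS: "h \<in> S_set A" and x: "x = kalton A h"
        and xU: "kalton A h + - kalton A g \<in> U" by (auto simp: T'_def)
      let ?d = "dff A h g"
      have dS: "?d \<in> S_set A" using dff_S[OF hS gS] .
      have "kalton A ?d \<in> U" using dff_kalton[OF hS gS] xU by simp
      then have dW: "\<And>a. a \<in> A \<Longrightarrow> ?d a \<in> W" using U(3)[OF dS] by blast
      have "h \<in> PiE A Ub"
      proof (unfold PiE_iff, intro conjI ballI)
        show "h \<in> extensional A" using hS by (simp add: S_set_iff PiE_iff)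
        fix a assume aA: "a \<in> A"
        have hc: "h a \<in> cyc a" using hS aA by (auto simp: S_set_iff PiE_iff)
        show "h a \<in> Ub a"
        proof (cases "a \<in> F")
          case True
          then have "?d a + g a \<in> Oa a" using dW[OF aA] by (simp add: W_def)
          then have "h a \<in> Oa a" using aA by (simp add: dff_def)
          then show ?thesis using Oa aA hc by blast
        next
          case False then show ?thesis using aA hc by (simp add: F_def)
        qed
      qed
      then have "h \<in> V" using Ub(4) hS VT by blast
      then show "x \<in> kalton A ` V" using x by blast
    qed
    then show "\<exists>T. openin (top_of_set (kalton A ` S_set A)) T \<and> y \<in> T \<and> T \<subseteq> kalton A ` V"
      using oT' yT' by blast
  qed
qed



lemma dir1:
  fixes A :: "'a::{topological_ab_group_add,t2_space} set"
  assumes ti: "top_independent A" and ac: "abs_cauchy_summable A"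
  shows "0 \<notin> A \<and> top_iso_embedding A"
proof
  show "0 \<notin> A" using ti by (simp add: top_independent_def)
  show "top_iso_embedding A" unfolding top_iso_embedding_def
  proof (rule bijective_open_imp_homeomorphic_map)
    show "continuous_map (S_top A) (top_of_set (kalton A ` S_set A)) (kalton A)"
      by (rule continuous_map_into_subtopology[OF kalton_cont[OF ac]]) (auto simp: topspace_S)
    show "open_map (S_top A) (top_of_set (kalton A ` S_set A)) (kalton A)"
      by (rule kalton_open[OF ti])
    show "kalton A ` topspace (S_top A) = topspace (top_of_set (kalton A ` S_set A))"
      by (simp add: topspace_S)
    show "inj_on (kalton A) (topspace (S_top A))"
      using kalton_inj[OF ti] by (simp add: topspace_S)
  qed
qed

lemma dir2:
  fixes A :: "'a::{topological_ab_group_add,t2_space} set"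
  assumes A0: "0 \<notin> A" and emb: "top_iso_embedding A"
  shows "top_independent A \<and> abs_cauchy_summable A"
proof -
  have hom: "homeomorphic_map (S_top A) (top_of_set (kalton A ` S_set A)) (kalton A)"
    using emb by (simp add: top_iso_embedding_def)
  have cont: "continuous_map (S_top A) euclidean (kalton A)"
    using homeomorphic_imp_continuous_map[OF hom] continuous_map_in_subtopology by blast
  have inj: "inj_on (kalton A) (S_set A)"
    using homeomorphic_imp_injective_map[OF hom] by (simp add: topspace_S)
  have ac: "abs_cauchy_summable A"
    unfolding abs_cauchy_summable_def
  proof (intro allI impI)
    fix U :: "'a set" assume U: "open U \<and> 0 \<in> U"
    let ?P = "{x \<in> topspace (S_top A). kalton A x \<in> U}"
    have oP: "openin (S_top A) ?P"
      using openin_continuous_map_preimage[OF cont, of U] U by simp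
    then obtain T where oT: "openin (P_top A) T" and PT: "?P = T \<inter> S_set A"
      unfolding S_top_def openin_subtopology by blast
    have zP: "zro A \<in> ?P" using zro_S[of A] zro_kalton[of A] U by (simp add: topspace_S)
    then have zT: "zro A \<in> T" using PT by blast
    obtain Ub where Ub: "finite {a\<in>A. Ub a \<noteq> topspace (top_of_set (cyc a))}"
      "\<forall>a\<in>A. openin (top_of_set (cyc a)) (Ub a)" "zro A \<in> PiE A Ub" "PiE A Ub \<subseteq> T"
      using oT zT unfolding P_top_def openin_product_topology_alt by blast
    define F where "F = {a\<in>A. Ub a \<noteq> cyc a}"
    have finF: "finite F" "F \<subseteq> A" using Ub(1) by (auto simp: F_def)
    define H where "H = kalton A ` {h \<in> S_set A. \<forall>a\<in>F. h a = 0}"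
    have sH: "add_subgroup H" unfolding add_subgroup_def
    proof (intro conjI ballI)
      have "zro A \<in> {h \<in> S_set A. \<forall>a\<in>F. h a = 0}" using zro_S[of A] finF by (auto simp: zro_def)
      then show "0 \<in> H" unfolding H_def by (rule image_eqI[rotated]) (simp add: zro_kalton)
    next
      fix x y assume "x \<in> H" "y \<in> H"
      then obtain h1 h2 where h: "h1 \<in> S_set A" "\<forall>a\<in>F. h1 a = 0" "x = kalton A h1"
        "h2 \<in> S_set A" "\<forall>a\<in>F. h2 a = 0" "y = kalton A h2" by (auto simp: H_def)
      have "dff A h1 h2 \<in> {h \<in> S_set A. \<forall>a\<in>F. h a = 0}"
        using dff_S[OF h(1,4)] h(2,5) finF by (auto simp: dff_def)
      moreover have "x - y = kalton A (dff A h1 h2)" using dff_kalton[OF h(1,4)] h by simp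
      ultimately show "x - y \<in> H" unfolding H_def by blast
    qed
    have AH: "A - F \<subseteq> H"
    proof
      fix a assume a: "a \<in> A - F"
      define h where "h = restrict (\<lambda>b. if b = a then a else 0) A"
      have "{b\<in>A. h b \<noteq> 0} \<subseteq> {a}" by (auto simp: h_def)
      then have "finite {b\<in>A. h b \<noteq> 0}" by (rule finite_subset) simp
      then have hS: "h \<in> S_set A"
        by (auto simp: S_set_iff h_def PiE_iff self_cyc zero_cyc)
      have "kalton A h = sum h {a}" by (rule kalton_sum) (use a in \<open>auto simp: h_def\<close>)
      then have "kalton A h = a" using a by (simp add: h_def)
      moreover have "\<forall>b\<in>F. h b = 0" using a finF(2) by (auto simp: h_def)
      ultimately show "a \<in> H" unfolding H_def using hS by blast
    qed
    have HU: "H \<subseteq> U"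
    proof
      fix x assume "x \<in> H"
      then obtain h where hS: "h \<in> S_set A" and h0: "\<forall>a\<in>F. h a = 0" and x: "x = kalton A h"
        by (auto simp: H_def)
      have "h \<in> PiE A Ub"
      proof (unfold PiE_iff, intro conjI ballI)
        show "h \<in> extensional A" using hS by (simp add: S_set_iff PiE_iff)
        fix b assume bA: "b \<in> A"
        show "h b \<in> Ub b"
        proof (cases "b \<in> F")
          case True
          have "zro A b \<in> Ub b" using Ub(3) bA by (auto simp: PiE_iff)
          then show ?thesis using True h0 bA by (simp add: zro_def)
        next
          case False
          then show ?thesis using hS bA by (auto simp: F_def S_set_iff PiE_iff)
        qed
      qed
      then have "h \<in> ?P" using Ub(4) PT hS by blast
      then show "x \<in> U" using x by simp
    qed
    have "gen (A - F) \<subseteq> U" using gen_least[OF sH AH] HU by blast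
    then show "\<exists>F. finite F \<and> F \<subseteq> A \<and> gen (A - F) \<subseteq> U" using finF by blast
  qed
  have ti: "top_independent A"
    unfolding top_independent_def
  proof (intro conjI allI impI)
    show "0 \<notin> A" by (rule A0)
    fix W :: "'a set" assume W: "open W \<and> 0 \<in> W"
    obtain F0 where F0: "finite F0" "F0 \<subseteq> A" "gen (A - F0) \<subseteq> W"
      using ac W unfolding abs_cauchy_summable_def by blast
    define Ub where "Ub a = (if a \<in> F0 then cyc a \<inter> W else cyc a)" for a
    define N where "N = PiE A Ub \<inter> S_set A"
    have oN: "openin (S_top A) N"
      unfolding N_def S_top_def
    proof (rule openin_subtopology_Int)
      show "openin (P_top A) (PiE A Ub)" unfolding P_top_def
      proof (rule product_topology_basis)
        fix a show "openin (top_of_set (cyc a)) (Ub a)"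
          using W by (cases "a \<in> F0") (auto simp: Ub_def openin_open_Int)
      next
        show "finite {a. Ub a \<noteq> topspace (top_of_set (cyc a))}"
          by (rule finite_subset[OF _ F0(1)]) (auto simp: Ub_def)
      qed
    qed
    have "openin (top_of_set (kalton A ` S_set A)) (kalton A ` N)"
      using homeomorphic_map_openness_eq[OF hom] oN by blast
    then obtain U0 where U0: "open U0" "kalton A ` N = kalton A ` S_set A \<inter> U0"
      unfolding openin_open by blast
    have zN: "zro A \<in> N" using zro_S[of A] W by (auto simp: N_def Ub_def zro_def PiE_iff zero_cyc)
    then have "kalton A (zro A) \<in> kalton A ` N" by (rule imageI)
    then have "0 \<in> U0" using U0(2) zro_kalton[of A] by simp
    moreover have "\<forall>F z. finite F \<and> F \<subseteq> A \<and> (\<Sum>a\<in>F. zmul (z a) a) \<in> U0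
               \<longrightarrow> (\<forall>a\<in>F. zmul (z a) a \<in> W)"
    proof (intro allI impI)
      fix F z assume Fz: "finite F \<and> F \<subseteq> A \<and> (\<Sum>a\<in>F. zmul (z a) a) \<in> U0"
      define h where "h = restrict (\<lambda>a. if a \<in> F then zmul (z a) a else 0) A"
      have "{b\<in>A. h b \<noteq> 0} \<subseteq> F" by (auto simp: h_def)
      then have "finite {b\<in>A. h b \<noteq> 0}" using Fz finite_subset by blast
      moreover have zc: "\<And>b. zmul (z b) b \<in> cyc b" by (simp add: cyc_eq)
      ultimately have hS: "h \<in> S_set A"
        by (auto simp: S_set_iff h_def PiE_iff zero_cyc)
      have "kalton A h = sum h F" by (rule kalton_sum) (use Fz in \<open>auto simp: h_def\<close>)
      also have "\<dots> = (\<Sum>a\<in>F. zmul (z a) a)" by (rule sum.cong) (use Fz in \<open>auto simp: h_def\<close>)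
      finally have "kalton A h \<in> U0" using Fz by simp
      moreover have "kalton A h \<in> kalton A ` S_set A" using hS by (rule imageI)
      ultimately have "kalton A h \<in> kalton A ` N" using U0(2) by blast
      then obtain g where gN: "g \<in> N" and gh: "kalton A g = kalton A h" by auto
      have "g = h" using inj gN hS gh by (auto simp: N_def inj_on_def)
      then have hN: "h \<in> PiE A Ub" using gN by (simp add: N_def)
      show "\<forall>a\<in>F. zmul (z a) a \<in> W"
      proof
        fix a assume aF: "a \<in> F"
        then have aA: "a \<in> A" using Fz by blast
        show "zmul (z a) a \<in> W"
        proof (cases "a \<in> F0")
          case True
          have "h a \<in> Ub a" using hN aA by (auto simp: PiE_iff)
          then show ?thesis using True aF aA by (simp add: Ub_def h_def)
        next
          case False
          have "zmul (z a) a \<in> cyc a" by (simp add: cyc_eq)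
          then have "zmul (z a) a \<in> gen (A - F0)" using cyc_sub_gen[of a "A - F0"] aA False by blast
          then show ?thesis using F0(3) by blast
        qed
      qed
    qed
    ultimately show "\<exists>U. open U \<and> 0 \<in> U \<and>
        (\<forall>F z. finite F \<and> F \<subseteq> A \<and> (\<Sum>a\<in>F. zmul (z a) a) \<in> U \<longrightarrow> (\<forall>a\<in>F. zmul (z a) a \<in> W))"
      using U0(1) by blast
  qed
  show ?thesis using ti ac by blast
qed

theorem theorem5p1:
  fixes A :: "'a::{topological_ab_group_add,t2_space} set"
  shows "(top_independent A \<and> abs_cauchy_summable A) \<longleftrightarrow>
         (0 \<notin> A \<and> top_iso_embedding A)"
  using dir1 dir2 by blast

end
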